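(* Consider the algorithm described in the context (with parameters $p\in[0,1]$, $l\in\mathbb{N}$) run on a stream consistent with a representation of size $m$ with at most $k$ exceptions, in which each component has a unique label. Let $t$ be some iteration of the run, let $C[x]$ be some valid rule that exists during this iteration, and let $U(x)$ be the value of its update counter at the end of this iteration. Then the number of exceptions that caused updates to this rule until the end of iteration $t$ is at least $(U(x)-(m-1))/2$.
   Context: Setting. $\mathcal{X}$ is a domain, $\mathcal{Y}$ a finite label set, $\Phi$ a set of binary features on $\mathcal{X}$ closed under negation. A representation of size $m$ is a cover $\mathcal{G}=\{G_1,\dots,G_m\}$ of $\mathcal{X}$ by components with labels $\ell(G)$; each $x$ has a fixed component $G(x)\ni x$; $c^*(x)=\ell(G(x))$; for components $G_i,G_j$ with different labels there is $\phi(G_i,G_j)\in\Phi$ true on all of $G_i$ and false on all of $G_j$, with $\phi(G_j,G_i)=\neg\phi(G_i,G_j)$. Protocol: the learner first gets $x_0$ with label $y_0$; then each example $x_t$ arrives, the learner predicts a label with an explanation example previously seen with that label; on a mistake the teacher gives $y_t=c^*(x_t)$ and a feature $\phi(G(x_t),G(\hat x_t))$, $\hat x_t$ the explanation. An exception is an example on which the feedback is inconsistent with the representation/protocol; at most $k$ examples are exceptions. Non-exception examples are valid; a rule $C[x]$ is valid if $x$ is valid. Algorithm (parameters $p,l$; also uses $m$): receives $(x_0,y_0)$; maintains a list $L$ of rules, each indexed by a representative $x$, with a conjunction $C[x]$ of features, a label $\texttt{label}[x]$, and an update counter $U(x)$. On $x_t$: (a) If some $C[\hat x]\in L$ is satisfied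 by $x_t$, predict $\texttt{label}[\hat x]$ with explanation $\hat x$; if incorrect, receive $y_t$ and feature $\phi_t$; if $\hat x$ satisfies $\neg\phi_t$ and $x_t$ satisfies $\phi_t$, add $\neg\phi_t$ to $C[\hat x]$ (otherwise the conjunction is unchanged); in either case set $U(\hat x)\leftarrow U(\hat x)+1$ and delete the rule if $U(\hat x)\ge m+l-1$. (b) Otherwise, predict $y_0$ with explanation $x_0$; if incorrect, receive $y_t$ and $\phi$; if no rule in $L$ has label $y_t$, draw an independent bit $B$ with success probability $p$ and, if $B=1$, add a new rule with empty conjunction $C[x_t]$, $\texttt{label}[x_t]=y_t$, $U(x_t)=0$; else let $C[\hat x]$ be the rule in $L$ with label $y_t$, remove from $C[\hat x]$ some feature not satisfied by $x_t$, set $U(\hat x)\leftarrow U(\hat x)+1$, and delete the rule if $U(\hat x)\ge m+l-1$. An example "causes an update" to a rule if processing it increments that rule's counter $U$. *)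

theory Defs
  imports Complex_Main
begin

text \<open>Representation of size m: components G 0 .. G (m-1) with labels lab i,
  each point x has its fixed component gcomp x (with x in G (gcomp x)),
  separating features sep i j for components with different labels.\<close>

definition is_rep ::
  "('x \<Rightarrow> bool) set \<Rightarrow> nat \<Rightarrow> (nat \<Rightarrow> 'x set) \<Rightarrow> (nat \<Rightarrow> 'y) \<Rightarrow> ('x \<Rightarrow> nat)
   \<Rightarrow> (nat \<Rightarrow> nat \<Rightarrow> ('x \<Rightarrow> bool)) \<Rightarrow> bool" where
  "is_rep \<Phi> m G lab gcomp sep \<longleftrightarrow>
     (\<forall>\<phi>\<in>\<Phi>. (\<lambda>x. \<not> \<phi> x) \<in> \<Phi>) \<and>
     (\<forall>x. gcomp x < m \<and> x \<in> G (gcomp x)) \<and>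
     (\<forall>i<m. \<forall>j<m. lab i \<noteq> lab j \<longrightarrow>
        sep i j \<in> \<Phi> \<and> (\<forall>x\<in>G i. sep i j x) \<and> (\<forall>x\<in>G j. \<not> sep i j x) \<and>
        sep j i = (\<lambda>x. \<not> sep i j x))"

text \<open>State of the learner. Rules are indexed by the stream time of their
  representative example. The counter of a rule is kept after deletion.\<close>

record ('x, 'y) lstate =
  active :: "nat set"
  conj :: "nat \<Rightarrow> ('x \<Rightarrow> bool) set"
  rlab :: "nat \<Rightarrow> 'y"
  cnt :: "nat \<Rightarrow> nat"

definition sat :: "('x \<Rightarrow> bool) set \<Rightarrow> 'x \<Rightarrow> bool" where
  "sat C x \<longleftrightarrow> (\<forall>f\<in>C. f x)"

definition bump :: "nat \<Rightarrow> nat \<Rightarrow> nat \<Rightarrow> ('x, 'y) lstate \<Rightarrow> ('x, 'y) lstate" where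
  "bump m l s S = S\<lparr>cnt := (cnt S)(s := Suc (cnt S s)),
     active := (if Suc (cnt S s) \<ge> m + l - 1 then active S - {s} else active S)\<rparr>"

text \<open>One iteration t \<ge> 1. The example is xs t, the teacher's label ys t and
  feature phis t (only used when ys t differs from the prediction, i.e. on a mistake),
  B t is the realisation of the coin, e is the explanation chosen:
  Some s = rule with representative xs s (case (a)), None = default x_0 (case (b)).\<close>

definition step ::
  "nat \<Rightarrow> nat \<Rightarrow> (nat \<Rightarrow> 'x) \<Rightarrow> (nat \<Rightarrow> 'y) \<Rightarrow> (nat \<Rightarrow> 'x \<Rightarrow> bool) \<Rightarrow> (nat \<Rightarrow> bool)
   \<Rightarrow> nat \<Rightarrow> nat option \<Rightarrow> ('x, 'y) lstate \<Rightarrow> ('x, 'y) lstate \<Rightarrow> bool" where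
  "step m l xs ys phis B t e S S' \<longleftrightarrow>
    (case e of
      Some s \<Rightarrow> s \<in> active S \<and> sat (conj S s) (xs t) \<and>
        (if ys t = rlab S s then S' = S
         else S' = bump m l s (S\<lparr>conj := (conj S)(s :=
                (if \<not> phis t (xs s) \<and> phis t (xs t)
                 then insert (\<lambda>z. \<not> phis t z) (conj S s) else conj S s))\<rparr>))
    | None \<Rightarrow> (\<forall>s\<in>active S. \<not> sat (conj S s) (xs t)) \<and>
        (if ys t = ys 0 then S' = S
         else if (\<forall>s\<in>active S. rlab S s \<noteq> ys t) then
           S' = (if B t then S\<lparr>active := insert t (active S), conj := (conj S)(t := {}),
                               rlab := (rlab S)(t := ys t), cnt := (cnt S)(t := 0)\<rparr>
                 else S)
         else (\<exists>s\<in>active S. rlab S s = ys t \<and>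
                 (\<exists>f\<in>conj S s. \<not> f (xs t) \<and>
                    S' = bump m l s (S\<lparr>conj := (conj S)(s := conj S s - {f})\<rparr>)))))"

text \<open>A run: st 0 is the state after receiving (x_0, y_0); st t the state after iteration t.\<close>

definition alg_run ::
  "nat \<Rightarrow> nat \<Rightarrow> (nat \<Rightarrow> 'x) \<Rightarrow> (nat \<Rightarrow> 'y) \<Rightarrow> (nat \<Rightarrow> 'x \<Rightarrow> bool) \<Rightarrow> (nat \<Rightarrow> bool)
   \<Rightarrow> (nat \<Rightarrow> nat option) \<Rightarrow> (nat \<Rightarrow> ('x, 'y) lstate) \<Rightarrow> bool" where
  "alg_run m l xs ys phis B expl st \<longleftrightarrow>
     active (st 0) = {} \<and> (\<forall>s. cnt (st 0) s = 0) \<and>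
     (\<forall>t\<ge>1. step m l xs ys phis B t (expl t) (st (t - 1)) (st t))"

definition pred_lab :: "(nat \<Rightarrow> 'y) \<Rightarrow> (nat \<Rightarrow> nat option) \<Rightarrow> (nat \<Rightarrow> ('x, 'y) lstate) \<Rightarrow> nat \<Rightarrow> 'y" where
  "pred_lab ys expl st t = (case expl t of None \<Rightarrow> ys 0 | Some s \<Rightarrow> rlab (st (t - 1)) s)"

definition expl_pt :: "(nat \<Rightarrow> 'x) \<Rightarrow> (nat \<Rightarrow> nat option) \<Rightarrow> nat \<Rightarrow> 'x" where
  "expl_pt xs expl t = (case expl t of None \<Rightarrow> xs 0 | Some s \<Rightarrow> xs s)"

definition valid_ex ::
  "(nat \<Rightarrow> 'y) \<Rightarrow> ('x \<Rightarrow> nat) \<Rightarrow> (nat \<Rightarrow> nat \<Rightarrow> ('x \<Rightarrow> bool)) \<Rightarrow> (nat \<Rightarrow> 'x) \<Rightarrow> (nat \<Rightarrow> 'y)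
   \<Rightarrow> (nat \<Rightarrow> 'x \<Rightarrow> bool) \<Rightarrow> (nat \<Rightarrow> nat option) \<Rightarrow> (nat \<Rightarrow> ('x, 'y) lstate) \<Rightarrow> nat \<Rightarrow> bool" where
  "valid_ex lab gcomp sep xs ys phis expl st t \<longleftrightarrow>
     (if t = 0 then ys 0 = lab (gcomp (xs 0))
      else ys t = lab (gcomp (xs t)) \<and>
        (ys t \<noteq> pred_lab ys expl st t \<longrightarrow>
           lab (gcomp (xs t)) \<noteq> lab (gcomp (expl_pt xs expl t)) \<and>
           phis t = sep (gcomp (xs t)) (gcomp (expl_pt xs expl t))))"

end

theory Submission
  imports Defs
begin


lemma step_cases:
  assumes "step m l xs ys phis B t e S S'" "s \<noteq> t"
  shows "(conj S' s = conj S s \<and> cnt S' s = cnt S s \<and> rlab S' s = rlab S s \<and> (s \<in> active S' \<longrightarrow> s \<in> active S))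
   \<or> (e = Some s \<and> s \<in> active S \<and> sat (conj S s) (xs t) \<and> ys t \<noteq> rlab S s \<and> cnt S' s = Suc (cnt S s)
       \<and> rlab S' s = rlab S s \<and> conj S' s = (if \<not> phis t (xs s) \<and> phis t (xs t)
                 then insert (\<lambda>z. \<not> phis t z) (conj S s) else conj S s))
   \<or> (e = None \<and> s \<in> active S \<and> ys t \<noteq> ys 0 \<and> rlab S s = ys t
       \<and> (\<exists>f\<in>conj S s. \<not> f (xs t) \<and> conj S' s = conj S s - {f})
       \<and> cnt S' s = Suc (cnt S s) \<and> rlab S' s = rlab S s)"
proof (cases e)
  case None
  then show ?thesis using assms unfolding step_def bump_def
    by (auto split: if_splits)
next
  case (Some a)
  then show ?thesis using assms unfolding step_def bump_def
    by (cases "a = s") (auto split: if_splits)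
qed

lemma step_new:
  assumes "step m l xs ys phis B t e S S'" "s \<in> active S'" "s \<notin> active S"
  shows "s = t \<and> conj S' s = {} \<and> cnt S' s = 0 \<and> rlab S' s = ys t"
  using assms unfolding step_def bump_def
  by (cases e) (auto split: if_splits)


theorem lemma5:
  fixes \<Phi> :: "('x \<Rightarrow> bool) set" and m l k :: nat and G :: "nat \<Rightarrow> 'x set"
    and lab :: "nat \<Rightarrow> 'y::finite" and gcomp :: "'x \<Rightarrow> nat"
    and sep :: "nat \<Rightarrow> nat \<Rightarrow> ('x \<Rightarrow> bool)"
    and xs :: "nat \<Rightarrow> 'x" and ys :: "nat \<Rightarrow> 'y" and phis :: "nat \<Rightarrow> 'x \<Rightarrow> bool"
    and B :: "nat \<Rightarrow> bool" and expl :: "nat \<Rightarrow> nat option"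
    and st :: "nat \<Rightarrow> ('x, 'y) lstate" and t s :: nat
  assumes rep: "is_rep \<Phi> m G lab gcomp sep"
    and uniq: "inj_on lab {..<m}"
    and run: "alg_run m l xs ys phis B expl st"
    and fin_exc: "finite {i. \<not> valid_ex lab gcomp sep xs ys phis expl st i}"
    and k_exc: "card {i. \<not> valid_ex lab gcomp sep xs ys phis expl st i} \<le> k"
    and t1: "1 \<le> t"
    and exists: "s \<in> active (st (t - 1)) \<or> s \<in> active (st t)"
    and valid: "valid_ex lab gcomp sep xs ys phis expl st s"
  shows "(real (cnt (st t) s) - (real m - 1)) / 2
           \<le> real (card {i \<in> {1..t}. \<not> valid_ex lab gcomp sep xs ys phis expl st i
                                    \<and> cnt (st i) s = Suc (cnt (st (i - 1)) s)})"
proof -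
  have rep_cov: "\<And>x. gcomp x < m \<and> x \<in> G (gcomp x)" using rep unfolding is_rep_def by blast
  have rep_sep: "\<And>i j. i < m \<Longrightarrow> j < m \<Longrightarrow> lab i \<noteq> lab j \<Longrightarrow>
        (\<forall>x\<in>G i. sep i j x) \<and> (\<forall>x\<in>G j. \<not> sep i j x)" using rep unfolding is_rep_def by blast
  have st0: "active (st 0) = {}" "\<And>s. cnt (st 0) s = 0" using run unfolding alg_run_def by auto
  have stp: "\<And>i. step m l xs ys phis B (Suc i) (expl (Suc i)) (st i) (st (Suc i))"
    using run unfolding alg_run_def by (metis diff_Suc_1 le_add1 plus_1_eq_Suc)
  have act_le: "s \<in> active (st i) \<Longrightarrow> 1 \<le> s \<and> s \<le> i" for i
  proof (induction i)
    case 0 then show ?case using st0 by simp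
  next
    case (Suc i)
    then show ?case using step_new[OF stp[of i], of s] by (cases "s \<in> active (st i)") auto
  qed
  from exists have sact: "1 \<le> s \<and> s \<le> t" using act_le[of "t - 1"] act_le[of t] by auto
  then obtain s0 where s0: "s = Suc s0" by (cases s) auto
  have "s \<in> active (st s)"
  proof (rule ccontr)
    assume nin: "s \<notin> active (st s)"
    have "s \<notin> active (st (s + n))" for n
    proof (induction n)
      case 0 then show ?case using nin by simp
    next
      case (Suc n)
      then show ?case using step_new[OF stp[of "s+n"], of s] by auto
    qed
    then show False using exists sact
      by (metis add_diff_cancel_left' le_add_diff_inverse diff_le_self le_diff_conv2 t1
           add.commute act_le)
  qed
  moreover have "s \<notin> active (st s0)" using act_le[of s0] s0 by auto
  ultimately have new: "conj (st s) s = {} \<and> cnt (st s) s = 0 \<and> rlab (st s) s = ys s"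
    using step_new[OF stp[of s0], of s] s0 by auto
  define g where "g = gcomp (xs s)"
  have g: "g < m" "xs s \<in> G g" using rep_cov g_def by auto
  have ys_s: "ys s = lab g" using valid sact unfolding valid_ex_def g_def by auto
  define Sg where "Sg = (\<lambda>j. \<lambda>z. \<not> sep j g z) ` {j. j < m \<and> lab j \<noteq> lab g}"
  define V where "V = valid_ex lab gcomp sep xs ys phis expl st"
  define E where "E = (\<lambda>i. card {j \<in> {1..i}. \<not> V j \<and> cnt (st j) s = Suc (cnt (st (j - 1)) s)})"
  have E_mono: "E i \<le> E (Suc i)" for i
    unfolding E_def by (rule card_mono) auto
  have E_suc: "\<not> V (Suc i) \<Longrightarrow> cnt (st (Suc i)) s = Suc (cnt (st i) s) \<Longrightarrow> E (Suc i) = Suc (E i)" for i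
  proof -
    assume a: "\<not> V (Suc i)" "cnt (st (Suc i)) s = Suc (cnt (st i) s)"
    have "{j \<in> {1..Suc i}. \<not> V j \<and> cnt (st j) s = Suc (cnt (st (j - 1)) s)}
      = insert (Suc i) {j \<in> {1..i}. \<not> V j \<and> cnt (st j) s = Suc (cnt (st (j - 1)) s)}"
      using a by auto
    then show ?thesis unfolding E_def by simp
  qed
  have inv: "finite (conj (st (s + n)) s) \<and> rlab (st (s + n)) s = ys s \<and>
     cnt (st (s + n)) s + card (conj (st (s + n)) s - Sg) \<le> card (conj (st (s + n)) s \<inter> Sg) + 2 * E (s + n)" for n
  proof (induction n)
    case 0 then show ?case using new by simp
  next
    case (Suc n)
    let ?i = "s + n"
    let ?C = "conj (st ?i) s"
    let ?C' = "conj (st (Suc ?i)) s"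
    have ne: "s \<noteq> Suc ?i" by simp
    have fin: "finite ?C" and rl: "rlab (st ?i) s = ys s"
      and IH: "cnt (st ?i) s + card (?C - Sg) \<le> card (?C \<inter> Sg) + 2 * E ?i" using Suc by auto
    have em: "E ?i \<le> E (Suc ?i)" by (rule E_mono)
    from step_cases[OF stp[of ?i] ne] show ?case
    proof (elim disjE conjE)
      assume "?C' = ?C" "cnt (st (Suc ?i)) s = cnt (st ?i) s" "rlab (st (Suc ?i)) s = rlab (st ?i) s"
      then show ?thesis using fin rl IH em by simp
    next
      assume ex: "expl (Suc ?i) = Some s" and sa: "sat ?C (xs (Suc ?i))"
        and yn: "ys (Suc ?i) \<noteq> rlab (st ?i) s"
        and cs: "cnt (st (Suc ?i)) s = Suc (cnt (st ?i) s)"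
        and rs: "rlab (st (Suc ?i)) s = rlab (st ?i) s"
        and cc: "?C' = (if \<not> phis (Suc ?i) (xs s) \<and> phis (Suc ?i) (xs (Suc ?i))
                 then insert (\<lambda>z. \<not> phis (Suc ?i) z) ?C else ?C)"
      show ?thesis
      proof (cases "V (Suc ?i)")
        case True
        define j where "j = gcomp (xs (Suc ?i))"
        have j: "j < m" "xs (Suc ?i) \<in> G j" using rep_cov j_def by auto
        have pl: "pred_lab ys expl st (Suc ?i) = rlab (st ?i) s" unfolding pred_lab_def using ex by simp
        have ep: "expl_pt xs expl (Suc ?i) = xs s" unfolding expl_pt_def using ex by simp
        have vv: "lab j \<noteq> lab g \<and> phis (Suc ?i) = sep j g"
          using True yn pl ep unfolding V_def valid_ex_def j_def g_def by auto
        have ss: "(\<forall>x\<in>G j. sep j g x) \<and> (\<forall>x\<in>G g. \<not> sep j g x)" using rep_sep[OF j(1) g(1)] vv by blast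
        have c1: "\<not> phis (Suc ?i) (xs s) \<and> phis (Suc ?i) (xs (Suc ?i))" using ss vv g j by auto
        have inS: "(\<lambda>z. \<not> phis (Suc ?i) z) \<in> Sg" unfolding Sg_def using vv j by auto
        have nC: "(\<lambda>z. \<not> phis (Suc ?i) z) \<notin> ?C" using sa c1 unfolding sat_def by auto
        have e1: "?C' \<inter> Sg = insert (\<lambda>z. \<not> phis (Suc ?i) z) (?C \<inter> Sg)" using cc c1 inS by auto
        have e2: "?C' - Sg = ?C - Sg" using cc c1 inS by auto
        have "card (?C' \<inter> Sg) = Suc (card (?C \<inter> Sg))" using e1 nC fin by simp
        then show ?thesis using fin rl IH em cc cs rs e2 by simp
      next
        case False
        have es: "E (Suc ?i) = Suc (E ?i)" using E_suc[OF False cs] .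
        have "card (?C' - Sg) \<le> Suc (card (?C - Sg))"
        proof -
          have "?C' - Sg \<subseteq> insert (\<lambda>z. \<not> phis (Suc ?i) z) (?C - Sg)" using cc by auto
          then have "card (?C' - Sg) \<le> card (insert (\<lambda>z. \<not> phis (Suc ?i) z) (?C - Sg))"
            using fin by (intro card_mono) auto
          also have "\<dots> \<le> Suc (card (?C - Sg))" by (rule card_insert_le_m1) simp_all
          finally show ?thesis .
        qed
        moreover have "card (?C \<inter> Sg) \<le> card (?C' \<inter> Sg)"
          using cc fin by (intro card_mono) auto
        ultimately show ?thesis using fin rl IH cc cs rs es by auto
      qed
    next
      assume ex: "expl (Suc ?i) = None" and sa: "s \<in> active (st ?i)"
        and yl: "rlab (st ?i) s = ys (Suc ?i)"
        and fe: "\<exists>f\<in>?C. \<not> f (xs (Suc ?i)) \<and> ?C' = ?C - {f}"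
        and cs: "cnt (st (Suc ?i)) s = Suc (cnt (st ?i) s)"
        and rs: "rlab (st (Suc ?i)) s = rlab (st ?i) s"
      from fe obtain f where f: "f \<in> ?C" "\<not> f (xs (Suc ?i))" "?C' = ?C - {f}" by blast
      have finC': "finite ?C'" using fin f by simp
      show ?thesis
      proof (cases "V (Suc ?i)")
        case True
        have yv: "ys (Suc ?i) = lab (gcomp (xs (Suc ?i)))" using True unfolding V_def valid_ex_def by simp
        have "gcomp (xs (Suc ?i)) = g"
          using uniq yv yl rl ys_s g rep_cov unfolding inj_on_def by (metis lessThan_iff)
        then have xg: "xs (Suc ?i) \<in> G g" using rep_cov by metis
        have fS: "f \<notin> Sg"
        proof
          assume "f \<in> Sg"
          then obtain j where "j < m" "lab j \<noteq> lab g" "f = (\<lambda>z. \<not> sep j g z)" unfolding Sg_def by auto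
          then show False using rep_sep[of j g] g xg f(2) by auto
        qed
        have e1: "?C' \<inter> Sg = ?C \<inter> Sg" using f fS by auto
        have e2: "?C - Sg = insert f (?C' - Sg)" using f fS by auto
        have "card (?C - Sg) = Suc (card (?C' - Sg))" using e2 f finC' by simp
        then show ?thesis using finC' rl IH em cs rs e1 by simp
      next
        case False
        have es: "E (Suc ?i) = Suc (E ?i)" using E_suc[OF False cs] .
        have "card (?C' - Sg) \<le> card (?C - Sg)" using f fin by (intro card_mono) auto
        moreover have "card (?C \<inter> Sg) \<le> Suc (card (?C' \<inter> Sg))"
        proof -
          have "?C \<inter> Sg \<subseteq> insert f (?C' \<inter> Sg)" using f by auto
          then have "card (?C \<inter> Sg) \<le> card (insert f (?C' \<inter> Sg))"
            using finC' by (intro card_mono) auto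
          also have "\<dots> \<le> Suc (card (?C' \<inter> Sg))" by (rule card_insert_le_m1) (simp_all add: finC')
          finally show ?thesis .
        qed
        ultimately show ?thesis using finC' rl IH cs rs es by auto
      qed
    qed
  qed
  have cSg: "card Sg \<le> m - 1"
  proof -
    have "card Sg \<le> card {j. j < m \<and> lab j \<noteq> lab g}" unfolding Sg_def by (rule card_image_le) simp
    also have "\<dots> \<le> card ({..<m} - {g})" by (rule card_mono) auto
    also have "\<dots> = m - 1" using g by simp
    finally show ?thesis .
  qed
  obtain n where tn: "t = s + n" using sact le_Suc_ex by blast
  have fin: "finite (conj (st t) s)" and main: "cnt (st t) s \<le> card (conj (st t) s \<inter> Sg) + 2 * E t"
    using inv[of n] tn by auto
  have "card (conj (st t) s \<inter> Sg) \<le> card Sg" unfolding Sg_def by (intro card_mono) auto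
  with main cSg have "cnt (st t) s \<le> m - 1 + 2 * E t" by linarith
  then have "real (cnt (st t) s) \<le> real m - 1 + 2 * real (E t)" using g by linarith
  then show ?thesis unfolding E_def V_def by simp
qed

end
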